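(* Let $P$ and $Q$ be persistence diagrams, i.e. finite multisets of points in $\mathbb{R}^2$. Let $\pi:\mathbb{R}^2\to L$ be the projection onto the diagonal $L=\{(x,x)\mid x\in\mathbb{R}\}$, $\pi(p)=\big(\tfrac{p.x+p.y}{2},\tfrac{p.x+p.y}{2}\big)$, and set $\widehat P = P\cup\pi(Q)$ and $\widehat Q = Q\cup \pi(P)$ (as multisets). Let $\mu_{\widehat P}$ and $\nu_{\widehat Q}$ be the discrete measures induced by $\widehat P$ and $\widehat Q$ (each point carrying mass equal to its multiplicity). Then $$d_{OT}(\mu_{\widehat P},\nu_{\widehat Q}) \le 2\, d_W(P,Q).$$
   Context: For two discrete measures $\mu,\nu$ on a finite set $X\subset\mathbb{R}^2$ with equal total mass, $d_{OT}(\mu,\nu)=\min_{\tau}\sum_{x,y\in X}\tau(x,y)\|x-y\|_2$, where $\tau$ ranges over nonnegative measures on $X\times X$ whose two marginals are $\mu$ and $\nu$. For finite multisets $A,B\subset\mathbb{R}^2$, an augmented matching is a subset $\Gamma\subset (A\cup\pi(B))\times(B\cup\pi(A))$ such that each element of $A$ and of $B$ (counted with multiplicity) appears in exactly one pair of $\Gamma$, and every pair $(a,b)\in\Gamma$ has one of the forms: (1) $a\in A,b\in B$; (2) $a\in A$, $b=\pi(a)$; (3) $a=\pi(b)$, $b\in B$. The 1-Wasserstein distance between persistence diagrams is $d_W(P,Q)=\min_\Gamma\sum_{(p,q)\in\Gamma}\|p-q\|_2$, the minimum over all augmented matchings $\Gamma$ for $P$ and $Q$. *)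

theory Defs
  imports "HOL-Analysis.Analysis" "HOL-Library.Multiset"
begin

type_synonym pt = "real \<times> real"

definition eucl :: "pt \<Rightarrow> pt \<Rightarrow> real" where
  "eucl p q = sqrt ((fst p - fst q)^2 + (snd p - snd q)^2)"

definition diag_proj :: "pt \<Rightarrow> pt" where
  "diag_proj p = ((fst p + snd p) / 2, (fst p + snd p) / 2)"

definition transport_plan :: "pt set \<Rightarrow> (pt \<Rightarrow> real) \<Rightarrow> (pt \<Rightarrow> real) \<Rightarrow> (pt \<times> pt \<Rightarrow> real) \<Rightarrow> bool" where
  "transport_plan X mu nu tau \<longleftrightarrow>
     (\<forall>z. tau z \<ge> 0) \<and> (\<forall>z. z \<notin> X \<times> X \<longrightarrow> tau z = 0) \<and>
     (\<forall>x\<in>X. (\<Sum>y\<in>X. tau (x, y)) = mu x) \<and>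
     (\<forall>y\<in>X. (\<Sum>x\<in>X. tau (x, y)) = nu y)"

definition d_OT :: "pt set \<Rightarrow> (pt \<Rightarrow> real) \<Rightarrow> (pt \<Rightarrow> real) \<Rightarrow> real" where
  "d_OT X mu nu = Inf {(\<Sum>z\<in>X \<times> X. tau z * eucl (fst z) (snd z)) | tau. transport_plan X mu nu tau}"

definition mset_measure :: "pt multiset \<Rightarrow> pt \<Rightarrow> real" where
  "mset_measure A x = real (count A x)"

text \<open>An augmented matching between multisets A and B, with multiplicities, is given by
  M (pairs of type (1): a in A matched to b in B), DA (elements a of A matched to pi(a),
  type (2)) and DB (elements b of B matched to pi(b), type (3)), such that every element
  of A and of B (with multiplicity) occurs in exactly one pair.\<close>
definition aug_matching :: "pt multiset \<Rightarrow> pt multiset \<Rightarrow> (pt \<times> pt) multiset \<Rightarrow> pt multiset \<Rightarrow> pt multiset \<Rightarrow> bool" where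
  "aug_matching A B M DA DB \<longleftrightarrow> image_mset fst M + DA = A \<and> image_mset snd M + DB = B"

definition aug_cost :: "(pt \<times> pt) multiset \<Rightarrow> pt multiset \<Rightarrow> pt multiset \<Rightarrow> real" where
  "aug_cost M DA DB =
     (\<Sum>z\<in>#M. eucl (fst z) (snd z)) + (\<Sum>a\<in>#DA. eucl a (diag_proj a)) + (\<Sum>b\<in>#DB. eucl (diag_proj b) b)"

definition d_W :: "pt multiset \<Rightarrow> pt multiset \<Rightarrow> real" where
  "d_W P Q = Inf {aug_cost M DA DB | M DA DB. aug_matching P Q M DA DB}"

end

theory Submission
  imports Defs
begin

lemma count_fst_sum:
  assumes "finite X" "set_mset T \<subseteq> X \<times> X" "x \<in> X"
  shows "(\<Sum>y\<in>X. real (count T (x, y))) = real (count (image_mset fst T) x)"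
  using assms(2)
proof (induction T)
  case empty
  then show ?case by simp
next
  case (add z T)
  obtain a b where z: "z = (a,b)" by force
  have bX: "b \<in> X" using add.prems z by auto
  have IH: "(\<Sum>y\<in>X. real (count T (x, y))) = real (count (image_mset fst T) x)"
    using add by auto
  have "(\<Sum>y\<in>X. real (count (add_mset z T) (x, y)))
      = (\<Sum>y\<in>X. real (count T (x, y)) + (if y = b \<and> x = a then 1 else 0))"
    by (rule sum.cong) (auto simp: z)
  also have "\<dots> = (\<Sum>y\<in>X. real (count T (x, y))) + (\<Sum>y\<in>X. (if y = b \<and> x = a then 1 else 0))"
    by (simp add: sum.distrib)
  also have "(\<Sum>y\<in>X. (if y = b \<and> x = a then 1 else 0 :: real)) = (if x = a then 1 else 0)"
    using bX assms(1) by (cases "x = a") (auto simp: sum.delta)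
  finally show ?case using IH z by auto
qed

lemma count_snd_sum:
  assumes "finite X" "set_mset T \<subseteq> X \<times> X" "y \<in> X"
  shows "(\<Sum>x\<in>X. real (count T (x, y))) = real (count (image_mset snd T) y)"
  using assms(2)
proof (induction T)
  case empty
  then show ?case by simp
next
  case (add z T)
  obtain a b where z: "z = (a,b)" by force
  have aX: "a \<in> X" using add.prems z by auto
  have IH: "(\<Sum>x\<in>X. real (count T (x, y))) = real (count (image_mset snd T) y)"
    using add by auto
  have "(\<Sum>x\<in>X. real (count (add_mset z T) (x, y)))
      = (\<Sum>x\<in>X. real (count T (x, y)) + (if x = a \<and> y = b then 1 else 0))"
    by (rule sum.cong) (auto simp: z)
  also have "\<dots> = (\<Sum>x\<in>X. real (count T (x, y))) + (\<Sum>x\<in>X. (if x = a \<and> y = b then 1 else 0))"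
    by (simp add: sum.distrib)
  also have "(\<Sum>x\<in>X. (if x = a \<and> y = b then 1 else 0 :: real)) = (if y = b then 1 else 0)"
    using aX assms(1) by (cases "y = b") (auto simp: sum.delta)
  finally show ?case using IH z by auto
qed

lemma cost_sum:
  assumes "finite S" "set_mset T \<subseteq> S"
  shows "(\<Sum>z\<in>S. real (count T z) * f z) = (\<Sum>z\<in>#T. f z)"
  using assms(2)
proof (induction T)
  case empty
  then show ?case by simp
next
  case (add w T)
  have wS: "w \<in> S" using add.prems by auto
  have IH: "(\<Sum>z\<in>S. real (count T z) * f z) = (\<Sum>z\<in>#T. f z)" using add by auto
  have "(\<Sum>z\<in>S. real (count (add_mset w T) z) * f z)
      = (\<Sum>z\<in>S. real (count T z) * f z + (if z = w then f z else 0))"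
    by (rule sum.cong) (auto simp: algebra_simps)
  also have "\<dots> = (\<Sum>z\<in>S. real (count T z) * f z) + f w"
    using wS assms(1) by (simp add: sum.distrib sum.delta')
  finally show ?case using IH by simp
qed

lemma eucl_nonneg: "eucl p q \<ge> 0"
  unfolding eucl_def by simp

lemma eucl_sym: "eucl p q = eucl q p"
  unfolding eucl_def by (simp add: power2_commute)

lemma proj_lip: "eucl (diag_proj b) (diag_proj a) \<le> eucl a b"
proof -
  define dx where "dx = fst a - fst b"
  define dy where "dy = snd a - snd b"
  have "eucl (diag_proj b) (diag_proj a) = sqrt (((dx+dy)/2)^2 + ((dx+dy)/2)^2)"
    unfolding eucl_def diag_proj_def dx_def dy_def
    by (simp add: power2_eq_square algebra_simps divide_simps)
  also have "\<dots> \<le> sqrt (dx^2 + dy^2)"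
  proof (rule real_sqrt_le_mono)
    have "0 \<le> (dx - dy)^2" by simp
    then show "((dx+dy)/2)^2 + ((dx+dy)/2)^2 \<le> dx^2 + dy^2"
      by (simp add: power2_eq_square algebra_simps divide_simps)
  qed
  also have "\<dots> = eucl a b" unfolding eucl_def dx_def dy_def by simp
  finally show ?thesis .
qed

theorem mainTheorem1:
  fixes P Q :: "pt multiset"
  defines "Ph \<equiv> P + image_mset diag_proj Q"
      and "Qh \<equiv> Q + image_mset diag_proj P"
  shows "d_OT (set_mset Ph \<union> set_mset Qh) (mset_measure Ph) (mset_measure Qh) \<le> 2 * d_W P Q"
proof -
  define X where "X = set_mset Ph \<union> set_mset Qh"
  have finX: "finite X" unfolding X_def by simp
  define Cs where "Cs = {(\<Sum>z\<in>X \<times> X. tau z * eucl (fst z) (snd z)) | tau. transport_plan X (mset_measure Ph) (mset_measure Qh) tau}"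
  have bdd: "bdd_below Cs"
    unfolding Cs_def transport_plan_def
    by (rule bdd_belowI[where m=0]) (auto intro!: sum_nonneg mult_nonneg_nonneg eucl_nonneg)
  have key: "d_OT X (mset_measure Ph) (mset_measure Qh) \<le> 2 * aug_cost M DA DB"
    if am: "aug_matching P Q M DA DB" for M DA DB
  proof -
    define T where "T = M + image_mset (\<lambda>z. (diag_proj (snd z), diag_proj (fst z))) M
       + image_mset (\<lambda>a. (a, diag_proj a)) DA + image_mset (\<lambda>b. (diag_proj b, b)) DB"
    have P: "P = image_mset fst M + DA" and Q: "Q = image_mset snd M + DB"
      using am unfolding aug_matching_def by auto
    have fT: "image_mset fst T = Ph"
      unfolding T_def Ph_def P Q by (simp add: image_mset.compositionality comp_def add_ac)
    have sT: "image_mset snd T = Qh"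
      unfolding T_def Qh_def P Q by (simp add: image_mset.compositionality comp_def add_ac)
    have sub: "set_mset T \<subseteq> X \<times> X"
    proof
      fix z assume "z \<in> set_mset T"
      then have "fst z \<in> set_mset Ph" "snd z \<in> set_mset Qh"
        using fT sT by (metis image_eqI set_image_mset)+
      then show "z \<in> X \<times> X" unfolding X_def by (cases z) auto
    qed
    define tau where "tau = (\<lambda>z. real (count T z))"
    have tp: "transport_plan X (mset_measure Ph) (mset_measure Qh) tau"
      unfolding transport_plan_def tau_def mset_measure_def
      using sub count_fst_sum[OF finX sub] count_snd_sum[OF finX sub] fT sT
      by (auto simp: not_in_iff[symmetric])
    have "(\<Sum>z\<in>X \<times> X. tau z * eucl (fst z) (snd z)) = (\<Sum>z\<in>#T. eucl (fst z) (snd z))"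
      unfolding tau_def using cost_sum[OF _ sub] finX by simp
    also have "\<dots> = (\<Sum>z\<in>#M. eucl (fst z) (snd z)) + (\<Sum>z\<in>#M. eucl (diag_proj (snd z)) (diag_proj (fst z)))
        + (\<Sum>a\<in>#DA. eucl a (diag_proj a)) + (\<Sum>b\<in>#DB. eucl (diag_proj b) b)"
      unfolding T_def by (simp add: image_mset.compositionality comp_def)
    also have "(\<Sum>z\<in>#M. eucl (diag_proj (snd z)) (diag_proj (fst z))) \<le> (\<Sum>z\<in>#M. eucl (fst z) (snd z))"
      by (rule sum_mset_mono) (rule proj_lip)
    finally have le: "(\<Sum>z\<in>X \<times> X. tau z * eucl (fst z) (snd z)) \<le>
        2 * (\<Sum>z\<in>#M. eucl (fst z) (snd z)) + (\<Sum>a\<in>#DA. eucl a (diag_proj a)) + (\<Sum>b\<in>#DB. eucl (diag_proj b) b)"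
      by simp
    have n1: "(\<Sum>a\<in>#DA. eucl a (diag_proj a)) \<ge> 0"
    proof -
      have "(\<Sum>a\<in>#DA. (0::real)) \<le> (\<Sum>a\<in>#DA. eucl a (diag_proj a))"
        by (rule sum_mset_mono) (simp add: eucl_nonneg)
      then show ?thesis by simp
    qed
    have n2: "(\<Sum>b\<in>#DB. eucl (diag_proj b) b) \<ge> 0"
    proof -
      have "(\<Sum>b\<in>#DB. (0::real)) \<le> (\<Sum>b\<in>#DB. eucl (diag_proj b) b)"
        by (rule sum_mset_mono) (simp add: eucl_nonneg)
      then show ?thesis by simp
    qed
    have "d_OT X (mset_measure Ph) (mset_measure Qh) \<le> (\<Sum>z\<in>X \<times> X. tau z * eucl (fst z) (snd z))"
      unfolding d_OT_def using tp bdd unfolding Cs_def by (intro cInf_lower) auto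
    also have "\<dots> \<le> 2 * aug_cost M DA DB" using le n1 n2 unfolding aug_cost_def by (simp add: algebra_simps)
    finally show ?thesis .
  qed
  have ne: "{aug_cost M DA DB | M DA DB. aug_matching P Q M DA DB} \<noteq> {}"
  proof -
    have "aug_matching P Q {#} P Q" unfolding aug_matching_def by simp
    then show ?thesis by blast
  qed
  have "d_OT X (mset_measure Ph) (mset_measure Qh) / 2 \<le> d_W P Q"
    unfolding d_W_def
  proof (rule cInf_greatest[OF ne])
    fix c assume "c \<in> {aug_cost M DA DB | M DA DB. aug_matching P Q M DA DB}"
    then obtain M DA DB where "aug_matching P Q M DA DB" "c = aug_cost M DA DB" by blast
    then show "d_OT X (mset_measure Ph) (mset_measure Qh) / 2 \<le> c" using key by fastforce
  qed
  then show ?thesis unfolding X_def by simp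
qed

end
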